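(* Let $(W,S,A,\alpha,\beta,R)$ be a POMDP, $\gamma\in(0,1)$ a discount factor and $\mu\in\Delta_W$ a start distribution. Then there is a stationary policy $\pi^\ast\in\Delta_{S,A}$ that is deterministic on each $s\in S$ with $|\operatorname{supp}(\beta(s|\cdot))|\le1$ (i.e. $\pi^\ast(\cdot|s)$ is a point mass for each such $s$) and satisfies $\mathcal{R}^\gamma_\mu(\pi^\ast)\ge\mathcal{R}^\gamma_\mu(\pi)$ for all $\pi\in\Delta_{S,A}$.
   Context: A POMDP is a tuple $(W,S,A,\alpha,\beta,R)$ with $W,S,A$ finite sets, $\beta(s|w)$ a Markov kernel from $W$ to $S$, $\alpha(w'|w,a)$ a Markov kernel from $W\times A$ to $W$, and $R\colon W\times A\to\mathbb{R}$. A stationary policy is a Markov kernel $\pi(a|s)$ from $S$ to $A$; $\Delta_{S,A}$ is the set of these. Running $\pi$ means: $w_0\sim\mu$, and at each time $t$ a sensor state $s_t\sim\beta(\cdot|w_t)$ is observed, an action $a_t\sim\pi(\cdot|s_t)$ is chosen, and $w_{t+1}\sim\alpha(\cdot|w_t,a_t)$. The discounted expected reward is $\mathcal{R}^\gamma_\mu(\pi)=\lim_{T\to\infty}\mathbb{E}\big[\sum_{t=0}^{T-1}\gamma^tR(w_t,a_t)\big]$ under this process. $\operatorname{supp}(\beta(s|\cdot))=\{w\colon\beta(s|w)>0\}$. *)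

theory Defs
  imports "HOL-Analysis.Analysis"
begin

text \<open>Finite sets W, S, A are modelled by finite types 'w, 's, 'a.
  A probability distribution on a finite type is a nonnegative function summing to 1.
  A Markov kernel K from X to Y is written K x y = K(y|x).\<close>

definition prob_dist :: "('x::finite \<Rightarrow> real) \<Rightarrow> bool" where
  "prob_dist p \<longleftrightarrow> (\<forall>x. 0 \<le> p x) \<and> (\<Sum>x\<in>UNIV. p x) = 1"

definition markov_kernel :: "('x \<Rightarrow> 'y::finite \<Rightarrow> real) \<Rightarrow> bool" where
  "markov_kernel K \<longleftrightarrow> (\<forall>x. prob_dist (K x))"

text \<open>Distribution of the world state w_t when running policy pi:
  alpha w a w' = alpha(w'|w,a), beta w s = beta(s|w), pol s a = pi(a|s).\<close>

fun state_dist ::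
  "('w::finite \<Rightarrow> 'a::finite \<Rightarrow> 'w \<Rightarrow> real) \<Rightarrow> ('w \<Rightarrow> 's::finite \<Rightarrow> real) \<Rightarrow>
   ('s \<Rightarrow> 'a \<Rightarrow> real) \<Rightarrow> ('w \<Rightarrow> real) \<Rightarrow> nat \<Rightarrow> 'w \<Rightarrow> real" where
  "state_dist alpha beta pol mu 0 = mu"
| "state_dist alpha beta pol mu (Suc t) =
     (\<lambda>w'. \<Sum>w\<in>UNIV. \<Sum>s\<in>UNIV. \<Sum>a\<in>UNIV.
        state_dist alpha beta pol mu t w * beta w s * pol s a * alpha w a w')"

definition exp_reward ::
  "('w::finite \<Rightarrow> 'a::finite \<Rightarrow> 'w \<Rightarrow> real) \<Rightarrow> ('w \<Rightarrow> 's::finite \<Rightarrow> real) \<Rightarrow>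
   ('w \<Rightarrow> 'a \<Rightarrow> real) \<Rightarrow> ('s \<Rightarrow> 'a \<Rightarrow> real) \<Rightarrow> ('w \<Rightarrow> real) \<Rightarrow> nat \<Rightarrow> real" where
  "exp_reward alpha beta R pol mu t =
     (\<Sum>w\<in>UNIV. \<Sum>s\<in>UNIV. \<Sum>a\<in>UNIV.
        state_dist alpha beta pol mu t w * beta w s * pol s a * R w a)"

definition disc_reward ::
  "('w::finite \<Rightarrow> 'a::finite \<Rightarrow> 'w \<Rightarrow> real) \<Rightarrow> ('w \<Rightarrow> 's::finite \<Rightarrow> real) \<Rightarrow>
   ('w \<Rightarrow> 'a \<Rightarrow> real) \<Rightarrow> real \<Rightarrow> ('w \<Rightarrow> real) \<Rightarrow> ('s \<Rightarrow> 'a \<Rightarrow> real) \<Rightarrow> real" where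
  "disc_reward alpha beta R gamma mu pol =
     lim (\<lambda>T. \<Sum>t<T. gamma ^ t * exp_reward alpha beta R pol mu t)"

end

theory Submission
  imports Defs
begin

definition dlt :: "'x \<Rightarrow> 'x \<Rightarrow> real" where "dlt v = (\<lambda>x. if x = v then 1 else 0)"

lemma ite10_mult[simp]: "(if P then 1 else 0) * (z::real) = (if P then z else 0)"
  "z * (if P then 1 else 0) = (if P then z else 0)" by auto

lemma dlt_dist: "prob_dist (dlt (v::'x::finite))"
  by (simp add: prob_dist_def dlt_def)

context
  fixes alpha :: "'w::finite \<Rightarrow> 'a::finite \<Rightarrow> 'w \<Rightarrow> real"
    and beta :: "'w \<Rightarrow> 's::finite \<Rightarrow> real"
    and R :: "'w \<Rightarrow> 'a \<Rightarrow> real"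
    and gamma :: real
  assumes beta: "markov_kernel beta"
    and alpha: "\<forall>w a. prob_dist (alpha w a)"
    and g0: "0 < gamma" and g1: "gamma < 1"
begin

definition stepP :: "('s \<Rightarrow> 'a \<Rightarrow> real) \<Rightarrow> 'w \<Rightarrow> 'w \<Rightarrow> real" where
  "stepP pol w w' = (\<Sum>s\<in>UNIV. \<Sum>a\<in>UNIV. beta w s * pol s a * alpha w a w')"

definition rr :: "('s \<Rightarrow> 'a \<Rightarrow> real) \<Rightarrow> 'w \<Rightarrow> real" where
  "rr pol w = (\<Sum>s\<in>UNIV. \<Sum>a\<in>UNIV. beta w s * pol s a * R w a)"

lemma sd_Suc: "state_dist alpha beta pol mu (Suc t) w' = (\<Sum>w\<in>UNIV. state_dist alpha beta pol mu t w * stepP pol w w')"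
  by (simp add: stepP_def sum_distrib_left mult.assoc)

lemma er_eq: "exp_reward alpha beta R pol mu t = (\<Sum>w\<in>UNIV. state_dist alpha beta pol mu t w * rr pol w)"
  by (simp add: exp_reward_def rr_def sum_distrib_left mult.assoc)

lemma beta_nn: "0 \<le> beta w s" and beta_sum: "(\<Sum>s\<in>UNIV. beta w s) = 1"
  using beta by (auto simp: markov_kernel_def prob_dist_def)

lemma alpha_nn: "0 \<le> alpha w a w'" and alpha_sum: "(\<Sum>w'\<in>UNIV. alpha w a w') = 1"
  using alpha by (auto simp: prob_dist_def)

lemma stepP_dist:
  assumes "markov_kernel pol"
  shows "prob_dist (stepP pol w)"
proof -
  have pn: "\<And>s a. 0 \<le> pol s a" and ps: "\<And>s. (\<Sum>a\<in>UNIV. pol s a) = 1"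
    using assms by (auto simp: markov_kernel_def prob_dist_def)
  have "(\<Sum>w'\<in>UNIV. stepP pol w w') = (\<Sum>s\<in>UNIV. \<Sum>a\<in>UNIV. \<Sum>w'\<in>UNIV. beta w s * pol s a * alpha w a w')"
    unfolding stepP_def by (subst sum.swap, rule sum.cong[OF refl], rule sum.swap)
  also have "\<dots> = (\<Sum>s\<in>UNIV. \<Sum>a\<in>UNIV. beta w s * pol s a * (\<Sum>w'\<in>UNIV. alpha w a w'))"
    by (simp add: sum_distrib_left)
  also have "\<dots> = (\<Sum>s\<in>UNIV. beta w s * (\<Sum>a\<in>UNIV. pol s a))"
    by (simp add: alpha_sum sum_distrib_left)
  also have "\<dots> = 1" by (simp add: ps beta_sum)
  finally show ?thesis unfolding prob_dist_def stepP_def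
    by (auto intro!: sum_nonneg mult_nonneg_nonneg beta_nn pn alpha_nn)
qed

lemma sd_dist:
  assumes "markov_kernel pol" "prob_dist mu"
  shows "prob_dist (state_dist alpha beta pol mu t)"
proof (induction t)
  case 0 then show ?case using assms by simp
next
  case (Suc t)
  have "(\<Sum>w'\<in>UNIV. state_dist alpha beta pol mu (Suc t) w') = (\<Sum>w\<in>UNIV. state_dist alpha beta pol mu t w * (\<Sum>w'\<in>UNIV. stepP pol w w'))"
    unfolding sd_Suc sum_distrib_left by (rule sum.swap)
  also have "\<dots> = 1" using stepP_dist[OF assms(1)] Suc by (simp add: prob_dist_def)
  finally show ?case using Suc stepP_dist[OF assms(1)] unfolding prob_dist_def
    by (auto simp del: state_dist.simps simp: sd_Suc intro!: sum_nonneg mult_nonneg_nonneg)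
qed

definition MR :: real where "MR = (\<Sum>w\<in>UNIV. \<Sum>a\<in>UNIV. \<bar>R w a\<bar>)"

lemma R_le: "\<bar>R w a\<bar> \<le> MR"
proof -
  have "\<bar>R w a\<bar> \<le> (\<Sum>a\<in>UNIV. \<bar>R w a\<bar>)" by (rule member_le_sum) auto
  also have "\<dots> \<le> MR" unfolding MR_def by (rule member_le_sum[where f="\<lambda>w. \<Sum>a\<in>UNIV. \<bar>R w a\<bar>"]) (auto intro: sum_nonneg)
  finally show ?thesis .
qed

lemma rr_bound:
  assumes "markov_kernel pol"
  shows "\<bar>rr pol w\<bar> \<le> MR"
proof -
  have pn: "\<And>s a. 0 \<le> pol s a" and ps: "\<And>s. (\<Sum>a\<in>UNIV. pol s a) = 1"
    using assms by (auto simp: markov_kernel_def prob_dist_def)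
  have "\<bar>rr pol w\<bar> \<le> (\<Sum>s\<in>UNIV. \<Sum>a\<in>UNIV. \<bar>beta w s * pol s a * R w a\<bar>)"
    unfolding rr_def by (rule order_trans[OF sum_abs]) (intro sum_mono sum_abs)
  also have "\<dots> \<le> (\<Sum>s\<in>UNIV. \<Sum>a\<in>UNIV. beta w s * pol s a * MR)"
    proof (intro sum_mono)
    fix s a
    have "\<bar>beta w s * pol s a * R w a\<bar> = (beta w s * pol s a) * \<bar>R w a\<bar>"
      using beta_nn[of w s] pn[of s a] by (simp add: abs_mult)
    also have "\<dots> \<le> (beta w s * pol s a) * MR"
      by (rule mult_left_mono[OF R_le]) (use beta_nn[of w s] pn[of s a] in simp)
    finally show "\<bar>beta w s * pol s a * R w a\<bar> \<le> beta w s * pol s a * MR" .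
  qed
  also have "\<dots> = (\<Sum>s\<in>UNIV. beta w s * MR * (\<Sum>a\<in>UNIV. pol s a))"
    by (simp add: sum_distrib_left mult_ac)
  also have "\<dots> = (\<Sum>s\<in>UNIV. beta w s) * MR" by (simp add: ps sum_distrib_right)
  also have "\<dots> = MR" by (simp add: beta_sum)
  finally show ?thesis .
qed

lemma er_bound:
  assumes "markov_kernel pol" "prob_dist mu"
  shows "\<bar>exp_reward alpha beta R pol mu t\<bar> \<le> MR"
proof -
  let ?d = "state_dist alpha beta pol mu t"
  have d: "prob_dist ?d" by (rule sd_dist[OF assms])
  have "\<bar>exp_reward alpha beta R pol mu t\<bar> \<le> (\<Sum>w\<in>UNIV. \<bar>?d w * rr pol w\<bar>)"
    unfolding er_eq by (rule sum_abs)
  also have "\<dots> \<le> (\<Sum>w\<in>UNIV. ?d w * MR)"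
    proof (intro sum_mono)
    fix w
    have "0 \<le> ?d w" using d by (simp add: prob_dist_def)
    then show "\<bar>?d w * rr pol w\<bar> \<le> ?d w * MR"
      by (simp add: abs_mult mult_left_mono[OF rr_bound[OF assms(1)]])
  qed
  also have "\<dots> = (\<Sum>w\<in>UNIV. ?d w) * MR" by (simp add: sum_distrib_right)
  also have "\<dots> = MR" using d by (simp add: prob_dist_def)
  finally show ?thesis .
qed

lemma summable_geo: "summable (\<lambda>t. MR * gamma ^ t)"
  using g0 g1 by (intro summable_mult summable_geometric) auto

lemma disc_sums:
  assumes "markov_kernel pol" "prob_dist mu"
  shows "(\<lambda>t. gamma ^ t * exp_reward alpha beta R pol mu t) sums disc_reward alpha beta R gamma mu pol"
proof -
  have sm: "summable (\<lambda>t. gamma ^ t * exp_reward alpha beta R pol mu t)"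
  proof (rule summable_comparison_test[OF _ summable_geo])
    have "norm (gamma ^ t * exp_reward alpha beta R pol mu t) \<le> MR * gamma ^ t" for t
    proof -
      have "norm (gamma ^ t * exp_reward alpha beta R pol mu t) = gamma ^ t * \<bar>exp_reward alpha beta R pol mu t\<bar>"
        using g0 by (simp add: abs_mult)
      also have "\<dots> \<le> gamma ^ t * MR"
        by (rule mult_left_mono[OF er_bound[OF assms]]) (use g0 in simp)
      finally show ?thesis by (simp add: mult.commute)
    qed
    then show "\<exists>N. \<forall>n\<ge>N. norm (gamma ^ n * exp_reward alpha beta R pol mu n) \<le> MR * gamma ^ n" by blast
  qed
  have e: "disc_reward alpha beta R gamma mu pol = suminf (\<lambda>t. gamma ^ t * exp_reward alpha beta R pol mu t)"
    unfolding disc_reward_def by (rule limI[OF summable_LIMSEQ[OF sm]])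
  show ?thesis unfolding e by (rule summable_sums[OF sm])
qed

definition stepmu :: "('s \<Rightarrow> 'a \<Rightarrow> real) \<Rightarrow> ('w \<Rightarrow> real) \<Rightarrow> 'w \<Rightarrow> real" where
  "stepmu pol mu w' = (\<Sum>w\<in>UNIV. mu w * stepP pol w w')"

lemma sd_shift: "state_dist alpha beta pol mu (Suc t) = state_dist alpha beta pol (stepmu pol mu) t"
proof (induction t)
  case 0 show ?case by (rule ext) (simp only: sd_Suc state_dist.simps(1) stepmu_def)
next
  case (Suc t)
  show ?case by (rule ext) (simp only: sd_Suc[of _ _ "Suc t"] sd_Suc[of _ _ t] Suc)
qed

lemma stepmu_dlt: "stepmu pol (dlt w) = stepP pol w"
  by (rule ext) (simp add: stepmu_def dlt_def)

lemma sd_lin: "state_dist alpha beta pol mu t w' = (\<Sum>v\<in>UNIV. mu v * state_dist alpha beta pol (dlt v) t w')"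
proof (induction t arbitrary: w')
  case 0 show ?case by (simp add: dlt_def)
next
  case (Suc t)
  have "state_dist alpha beta pol mu (Suc t) w' = (\<Sum>w\<in>UNIV. (\<Sum>v\<in>UNIV. mu v * state_dist alpha beta pol (dlt v) t w) * stepP pol w w')"
    by (simp only: sd_Suc Suc)
  also have "\<dots> = (\<Sum>w\<in>UNIV. \<Sum>v\<in>UNIV. mu v * (state_dist alpha beta pol (dlt v) t w * stepP pol w w'))"
    by (simp add: sum_distrib_right mult.assoc)
  also have "\<dots> = (\<Sum>v\<in>UNIV. \<Sum>w\<in>UNIV. mu v * (state_dist alpha beta pol (dlt v) t w * stepP pol w w'))"
    by (rule sum.swap)
  also have "\<dots> = (\<Sum>v\<in>UNIV. mu v * state_dist alpha beta pol (dlt v) (Suc t) w')"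
    by (simp only: sd_Suc sum_distrib_left)
  finally show ?case .
qed

lemma er_lin: "exp_reward alpha beta R pol mu t = (\<Sum>v\<in>UNIV. mu v * exp_reward alpha beta R pol (dlt v) t)"
proof -
  have "exp_reward alpha beta R pol mu t = (\<Sum>w\<in>UNIV. \<Sum>v\<in>UNIV. mu v * (state_dist alpha beta pol (dlt v) t w * rr pol w))"
    unfolding er_eq by (subst sd_lin) (simp add: sum_distrib_right mult.assoc)
  also have "\<dots> = (\<Sum>v\<in>UNIV. \<Sum>w\<in>UNIV. mu v * (state_dist alpha beta pol (dlt v) t w * rr pol w))"
    by (rule sum.swap)
  also have "\<dots> = (\<Sum>v\<in>UNIV. mu v * exp_reward alpha beta R pol (dlt v) t)"
    by (simp only: er_eq sum_distrib_left)
  finally show ?thesis .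
qed

definition VV :: "('s \<Rightarrow> 'a \<Rightarrow> real) \<Rightarrow> 'w \<Rightarrow> real" where
  "VV pol w = disc_reward alpha beta R gamma (dlt w) pol"

lemma lin_sums:
  assumes "markov_kernel pol"
  shows "(\<lambda>t. gamma ^ t * exp_reward alpha beta R pol mu t) sums (\<Sum>v\<in>UNIV. mu v * VV pol v)"
proof -
  have "(\<lambda>t. \<Sum>v\<in>UNIV. mu v * (gamma ^ t * exp_reward alpha beta R pol (dlt v) t)) sums (\<Sum>v\<in>UNIV. mu v * VV pol v)"
    unfolding VV_def by (intro sums_sum sums_mult disc_sums[OF assms dlt_dist])
  moreover have "(\<lambda>t. \<Sum>v\<in>UNIV. mu v * (gamma ^ t * exp_reward alpha beta R pol (dlt v) t)) = (\<lambda>t. gamma ^ t * exp_reward alpha beta R pol mu t)"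
    by (rule ext) (simp add: er_lin[of pol mu] sum_distrib_left mult_ac)
  ultimately show ?thesis by simp
qed

lemma disc_lin:
  assumes "markov_kernel pol" "prob_dist mu"
  shows "disc_reward alpha beta R gamma mu pol = (\<Sum>v\<in>UNIV. mu v * VV pol v)"
  using sums_unique2[OF disc_sums[OF assms] lin_sums[OF assms(1)]] .

lemma bellman:
  assumes "markov_kernel pol"
  shows "VV pol w = rr pol w + gamma * (\<Sum>w'\<in>UNIV. stepP pol w w' * VV pol w')"
proof -
  let ?f = "\<lambda>t. gamma ^ t * exp_reward alpha beta R pol (dlt w) t"
  have "(\<lambda>t. gamma ^ t * exp_reward alpha beta R pol (stepP pol w) t) sums (\<Sum>w'\<in>UNIV. stepP pol w w' * VV pol w')"
    by (rule lin_sums[OF assms])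
  then have "(\<lambda>t. gamma * (gamma ^ t * exp_reward alpha beta R pol (stepP pol w) t)) sums (gamma * (\<Sum>w'\<in>UNIV. stepP pol w w' * VV pol w'))"
    by (rule sums_mult)
  moreover have "(\<lambda>t. gamma * (gamma ^ t * exp_reward alpha beta R pol (stepP pol w) t)) = (\<lambda>t. ?f (Suc t))"
    by (rule ext) (simp only: exp_reward_def sd_shift stepmu_dlt power_Suc mult.assoc)
  ultimately have "(\<lambda>t. ?f (Suc t)) sums (gamma * (\<Sum>w'\<in>UNIV. stepP pol w w' * VV pol w'))" by simp
  then have "?f sums (gamma * (\<Sum>w'\<in>UNIV. stepP pol w w' * VV pol w') + ?f 0)"
    by (rule iffD1[OF sums_Suc_iff[of ?f]])
  moreover have "?f 0 = rr pol w" by (simp add: er_eq dlt_def)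
  moreover have "?f sums VV pol w" unfolding VV_def by (rule disc_sums[OF assms dlt_dist])
  ultimately show ?thesis using sums_unique2 by fastforce
qed

lemma bell_form:
  "rr pol w + gamma * (\<Sum>w'\<in>UNIV. stepP pol w w' * U w') =
   (\<Sum>s\<in>UNIV. beta w s * (\<Sum>a\<in>UNIV. pol s a * (R w a + gamma * (\<Sum>w'\<in>UNIV. alpha w a w' * U w'))))"
proof -
  have "(\<Sum>w'\<in>UNIV. stepP pol w w' * U w') = (\<Sum>w'\<in>UNIV. \<Sum>s\<in>UNIV. \<Sum>a\<in>UNIV. beta w s * pol s a * (alpha w a w' * U w'))"
    unfolding stepP_def sum_distrib_right by (simp add: mult_ac)
  also have "\<dots> = (\<Sum>s\<in>UNIV. \<Sum>a\<in>UNIV. \<Sum>w'\<in>UNIV. beta w s * pol s a * (alpha w a w' * U w'))"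
    by (subst sum.swap, rule sum.cong[OF refl], rule sum.swap)
  also have "\<dots> = (\<Sum>s\<in>UNIV. \<Sum>a\<in>UNIV. beta w s * pol s a * (\<Sum>w'\<in>UNIV. alpha w a w' * U w'))"
    by (simp only: sum_distrib_left)
  finally have 1: "(\<Sum>w'\<in>UNIV. stepP pol w w' * U w') = \<dots>" .
  show ?thesis unfolding 1 rr_def
    by (simp add: sum_distrib_left distrib_left sum.distrib mult_ac)
qed

lemma tele:
  assumes pol: "markov_kernel pol" and mu: "prob_dist mu"
    and U: "\<And>w. U w \<le> rr pol w + gamma * (\<Sum>w'\<in>UNIV. stepP pol w w' * U w')"
  shows "(\<Sum>w\<in>UNIV. mu w * U w) \<le> (\<Sum>t<T. gamma ^ t * exp_reward alpha beta R pol mu t)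
            + gamma ^ T * (\<Sum>w\<in>UNIV. state_dist alpha beta pol mu T w * U w)"
proof (induction T)
  case 0 show ?case by simp
next
  case (Suc T)
  let ?d = "state_dist alpha beta pol mu T"
  have dn: "\<And>w. 0 \<le> ?d w" using sd_dist[OF pol mu] by (simp add: prob_dist_def)
  have "(\<Sum>w\<in>UNIV. ?d w * U w) \<le> (\<Sum>w\<in>UNIV. ?d w * (rr pol w + gamma * (\<Sum>w'\<in>UNIV. stepP pol w w' * U w')))"
    by (intro sum_mono mult_left_mono U dn)
  also have "\<dots> = exp_reward alpha beta R pol mu T + gamma * (\<Sum>w\<in>UNIV. \<Sum>w'\<in>UNIV. ?d w * stepP pol w w' * U w')"
    by (simp add: er_eq distrib_left sum.distrib sum_distrib_left mult_ac)
  also have "(\<Sum>w\<in>UNIV. \<Sum>w'\<in>UNIV. ?d w * stepP pol w w' * U w') = (\<Sum>w'\<in>UNIV. state_dist alpha beta pol mu (Suc T) w' * U w')"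
    by (subst sum.swap) (simp only: sd_Suc sum_distrib_right)
  finally have step: "(\<Sum>w\<in>UNIV. ?d w * U w) \<le> exp_reward alpha beta R pol mu T + gamma * (\<Sum>w'\<in>UNIV. state_dist alpha beta pol mu (Suc T) w' * U w')" .
  have g: "0 \<le> gamma ^ T" using g0 by simp
  from Suc mult_left_mono[OF step g] show ?case by (simp add: algebra_simps)
qed

lemma improve:
  assumes pol: "markov_kernel pol" and mu: "prob_dist mu"
    and supp: "\<And>w. 0 < beta w s0 \<Longrightarrow> w = w0"
  shows "\<exists>a. markov_kernel (pol(s0 := dlt a)) \<and>
           disc_reward alpha beta R gamma mu pol \<le> disc_reward alpha beta R gamma mu (pol(s0 := dlt a))"
proof -
  let ?V = "VV pol"
  define Qw where "Qw w a = R w a + gamma * (\<Sum>w'\<in>UNIV. alpha w a w' * ?V w')" for w a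
  define m where "m = Max (range (Qw w0))"
  have "m \<in> range (Qw w0)" unfolding m_def by (rule Max_in) auto
  then obtain a where a: "Qw w0 a = m" by auto
  have amax: "Qw w0 b \<le> Qw w0 a" for b unfolding a m_def by (rule Max_ge) auto
  define pol' where "pol' = pol(s0 := dlt a)"
  have pn: "\<And>s a. 0 \<le> pol s a" and ps: "\<And>s. (\<Sum>a\<in>UNIV. pol s a) = 1"
    using pol by (auto simp: markov_kernel_def prob_dist_def)
  have pol': "markov_kernel pol'"
    using pol dlt_dist[of a] unfolding pol'_def markov_kernel_def by auto
  have key: "?V w \<le> rr pol' w + gamma * (\<Sum>w'\<in>UNIV. stepP pol' w w' * ?V w')" for w
  proof -
    have G: "rr p w + gamma * (\<Sum>w'\<in>UNIV. stepP p w w' * ?V w') =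
       beta w s0 * (\<Sum>b\<in>UNIV. p s0 b * Qw w b) + (\<Sum>s\<in>UNIV-{s0}. beta w s * (\<Sum>b\<in>UNIV. p s b * Qw w b))" for p
      unfolding bell_form Qw_def by (rule sum.remove) auto
    have rest: "(\<Sum>s\<in>UNIV-{s0}. beta w s * (\<Sum>b\<in>UNIV. pol' s b * Qw w b)) = (\<Sum>s\<in>UNIV-{s0}. beta w s * (\<Sum>b\<in>UNIV. pol s b * Qw w b))"
      by (rule sum.cong) (auto simp: pol'_def)
    have s0: "beta w s0 * (\<Sum>b\<in>UNIV. pol s0 b * Qw w b) \<le> beta w s0 * (\<Sum>b\<in>UNIV. pol' s0 b * Qw w b)"
    proof (cases "beta w s0 = 0")
      case True then show ?thesis by simp
    next
      case False
      then have "0 < beta w s0" using beta_nn[of w s0] by simp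
      then have w: "w = w0" by (rule supp)
      have "(\<Sum>b\<in>UNIV. pol s0 b * Qw w b) \<le> (\<Sum>b\<in>UNIV. pol s0 b * Qw w0 a)"
        unfolding w by (intro sum_mono mult_left_mono amax pn)
      also have "\<dots> = Qw w0 a" by (simp add: sum_distrib_right[symmetric] ps)
      also have "\<dots> = (\<Sum>b\<in>UNIV. pol' s0 b * Qw w b)" by (simp add: pol'_def dlt_def w)
      finally show ?thesis by (rule mult_left_mono) (rule beta_nn)
    qed
    have "?V w = rr pol w + gamma * (\<Sum>w'\<in>UNIV. stepP pol w w' * ?V w')" by (rule bellman[OF pol])
    also have "\<dots> \<le> rr pol' w + gamma * (\<Sum>w'\<in>UNIV. stepP pol' w w' * ?V w')"
      unfolding G rest using s0 by simp
    finally show ?thesis .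
  qed
  define B where "B = (\<Sum>w\<in>UNIV. \<bar>?V w\<bar>)"
  have bnd: "\<bar>\<Sum>w\<in>UNIV. state_dist alpha beta pol' mu T w * ?V w\<bar> \<le> B" for T
  proof -
    let ?d = "state_dist alpha beta pol' mu T"
    have d: "prob_dist ?d" by (rule sd_dist[OF pol' mu])
    have Vb: "\<bar>?V w\<bar> \<le> B" for w unfolding B_def by (rule member_le_sum) auto
    have "\<bar>\<Sum>w\<in>UNIV. ?d w * ?V w\<bar> \<le> (\<Sum>w\<in>UNIV. \<bar>?d w * ?V w\<bar>)" by (rule sum_abs)
    also have "\<dots> \<le> (\<Sum>w\<in>UNIV. ?d w * B)"
    proof (intro sum_mono)
      fix w
      have "0 \<le> ?d w" using d by (simp add: prob_dist_def)
      then show "\<bar>?d w * ?V w\<bar> \<le> ?d w * B" by (simp add: abs_mult mult_left_mono[OF Vb])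
    qed
    also have "\<dots> = (\<Sum>w\<in>UNIV. ?d w) * B" by (simp add: sum_distrib_right)
    also have "\<dots> = B" using d by (simp add: prob_dist_def)
    finally show ?thesis .
  qed
  have z: "(\<lambda>T. gamma ^ T * (\<Sum>w\<in>UNIV. state_dist alpha beta pol' mu T w * ?V w)) \<longlonglongrightarrow> 0"
  proof (rule Lim_null_comparison)
    show "\<forall>\<^sub>F T in sequentially. norm (gamma ^ T * (\<Sum>w\<in>UNIV. state_dist alpha beta pol' mu T w * ?V w)) \<le> gamma ^ T * B"
      using bnd g0 by (auto simp: abs_mult intro!: always_eventually mult_left_mono)
    have "(\<lambda>T. gamma ^ T * B) \<longlonglongrightarrow> 0 * B"
      by (intro tendsto_mult tendsto_const LIMSEQ_power_zero) (use g0 g1 in simp)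
    then show "(\<lambda>T. gamma ^ T * B) \<longlonglongrightarrow> 0" by simp
  qed
  have S: "(\<lambda>T. \<Sum>t<T. gamma ^ t * exp_reward alpha beta R pol' mu t) \<longlonglongrightarrow> disc_reward alpha beta R gamma mu pol'"
    using disc_sums[OF pol' mu] by (simp add: sums_def)
  have lim: "(\<lambda>T. (\<Sum>t<T. gamma ^ t * exp_reward alpha beta R pol' mu t)
            + gamma ^ T * (\<Sum>w\<in>UNIV. state_dist alpha beta pol' mu T w * ?V w)) \<longlonglongrightarrow> disc_reward alpha beta R gamma mu pol' + 0"
    by (rule tendsto_add[OF S z])
  have "(\<Sum>w\<in>UNIV. mu w * ?V w) \<le> disc_reward alpha beta R gamma mu pol' + 0"
    by (rule LIMSEQ_le_const[OF lim]) (use tele[OF pol' mu key] in blast)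
  then have "disc_reward alpha beta R gamma mu pol \<le> disc_reward alpha beta R gamma mu pol'"
    using disc_lin[OF pol mu] by simp
  then show ?thesis using pol' unfolding pol'_def by blast
qed

definition toP :: "real^'a^'s \<Rightarrow> 's \<Rightarrow> 'a \<Rightarrow> real" where "toP x = (\<lambda>s a. x $ s $ a)"

lemma toP_vec: "toP (\<chi> s. \<chi> a. pol s a) = pol"
  by (simp add: toP_def)

lemma sd_cont: "continuous_on UNIV (\<lambda>x. state_dist alpha beta (toP x) mu t w)"
proof (induction t arbitrary: w)
  case 0 show ?case by simp
next
  case (Suc t)
  show ?case unfolding state_dist.simps toP_def
    using Suc unfolding toP_def by (intro continuous_intros) auto
qed

lemma er_cont: "continuous_on UNIV (\<lambda>x. exp_reward alpha beta R (toP x) mu t)"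
  unfolding exp_reward_def using sd_cont[of mu t] unfolding toP_def
  by (intro continuous_intros) auto

definition Kv :: "(real^'a^'s) set" where "Kv = {x. markov_kernel (toP x)}"

lemma Kv_eq: "Kv = {x. \<forall>s a. 0 \<le> x $ s $ a} \<inter> {x. \<forall>s. (\<Sum>a\<in>UNIV. x $ s $ a) = 1}"
  by (auto simp: Kv_def markov_kernel_def prob_dist_def toP_def)

lemma Kv_compact: "compact Kv"
proof -
  have "closed Kv" unfolding Kv_eq
    by (intro closed_Int closed_Collect_all closed_Collect_le closed_Collect_eq continuous_intros)
  moreover have "bounded Kv"
    unfolding bounded_iff
  proof (intro exI ballI)
    fix x assume x: "x \<in> Kv"
    have "norm x \<le> (\<Sum>s\<in>UNIV. norm (x $ s))" unfolding norm_vec_def by (rule L2_set_le_sum) simp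
    also have "\<dots> \<le> (\<Sum>s\<in>(UNIV::'s set). 1)"
    proof (intro sum_mono)
      fix s
      have "norm (x $ s) \<le> (\<Sum>a\<in>UNIV. norm (x $ s $ a))" unfolding norm_vec_def by (rule L2_set_le_sum) simp
      also have "\<dots> = (\<Sum>a\<in>UNIV. x $ s $ a)" using x by (auto simp: Kv_eq)
      also have "\<dots> = 1" using x by (auto simp: Kv_eq)
      finally show "norm (x $ s) \<le> 1" .
    qed
    finally show "norm x \<le> real CARD('s)" by simp
  qed
  ultimately show ?thesis by (simp add: compact_eq_bounded_closed)
qed

lemma exists_opt:
  assumes mu: "prob_dist mu"
  shows "\<exists>p. markov_kernel p \<and> (\<forall>pol. markov_kernel pol \<longrightarrow>
     disc_reward alpha beta R gamma mu pol \<le> disc_reward alpha beta R gamma mu p)"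
proof -
  let ?F = "\<lambda>x. disc_reward alpha beta R gamma mu (toP x)"
  let ?f = "\<lambda>n x. gamma ^ n * exp_reward alpha beta R (toP x) mu n"
  have ul: "uniform_limit Kv (\<lambda>n x. \<Sum>i<n. ?f i x) (\<lambda>x. suminf (\<lambda>i. ?f i x)) sequentially"
  proof (rule Weierstrass_m_test[OF _ summable_geo])
    fix n x assume x: "x \<in> Kv"
    have "norm (?f n x) = gamma ^ n * \<bar>exp_reward alpha beta R (toP x) mu n\<bar>"
      using g0 by (simp add: abs_mult)
    also have "\<dots> \<le> gamma ^ n * MR"
      by (rule mult_left_mono[OF er_bound]) (use x mu g0 in \<open>auto simp: Kv_def\<close>)
    finally show "norm (?f n x) \<le> MR * gamma ^ n" by (simp add: mult.commute)
  qed
  have ci: "continuous_on Kv (\<lambda>x. \<Sum>i<n. ?f i x)" for n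
  proof (rule continuous_on_sum)
    fix i
    show "continuous_on Kv (\<lambda>x. ?f i x)"
      by (rule continuous_on_mult_left, rule continuous_on_subset[OF er_cont], rule subset_UNIV)
  qed
  have "continuous_on Kv (\<lambda>x. suminf (\<lambda>i. ?f i x))"
    by (rule uniform_limit_theorem[OF always_eventually[OF allI[OF ci]] ul]) simp
  then have cF: "continuous_on Kv ?F"
  proof (rule continuous_on_eq)
    fix x assume "x \<in> Kv"
    then have "markov_kernel (toP x)" by (simp add: Kv_def)
    from sums_unique[OF disc_sums[OF this mu]] show "suminf (\<lambda>i. ?f i x) = ?F x" by simp
  qed
  have "(\<chi> s. \<chi> a. dlt undefined a) \<in> Kv"
    using dlt_dist[of "undefined::'a"] toP_vec[of "\<lambda>(s::'s) (a::'a). dlt undefined a"] by (simp add: Kv_def markov_kernel_def)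
  then have "Kv \<noteq> {}" by blast
  from continuous_attains_sup[OF Kv_compact this cF]
  obtain x where x: "x \<in> Kv" "\<And>y. y \<in> Kv \<Longrightarrow> ?F y \<le> ?F x" by blast
  show ?thesis
  proof (intro exI conjI allI impI)
    show "markov_kernel (toP x)" using x by (simp add: Kv_def)
    fix pol :: "'s \<Rightarrow> 'a \<Rightarrow> real" assume "markov_kernel pol"
    then have "(\<chi> s. \<chi> a. pol s a) \<in> Kv" by (simp add: Kv_def toP_vec)
    from x(2)[OF this] show "disc_reward alpha beta R gamma mu pol \<le> ?F x" by (simp add: toP_vec)
  qed
qed

lemma det_all:
  assumes mu: "prob_dist mu" and pol: "markov_kernel pol" and fin: "finite S"
  shows "\<exists>p. markov_kernel p \<and> disc_reward alpha beta R gamma mu pol \<le> disc_reward alpha beta R gamma mu p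
          \<and> (\<forall>s\<in>S. card {w. beta w s > 0} \<le> 1 \<longrightarrow> (\<exists>a. p s = dlt a))"
  using fin
proof (induction S rule: finite_induct)
  case empty then show ?case using pol by blast
next
  case (insert s S)
  then obtain p where p: "markov_kernel p" "disc_reward alpha beta R gamma mu pol \<le> disc_reward alpha beta R gamma mu p"
    "\<forall>s\<in>S. card {w. beta w s > 0} \<le> 1 \<longrightarrow> (\<exists>a. p s = dlt a)" by blast
  show ?case
  proof (cases "card {w. beta w s > 0} \<le> 1")
    case False then show ?thesis using p by auto
  next
    case True
    then have one: "\<forall>w1\<in>{w. beta w s > 0}. \<forall>w2\<in>{w. beta w s > 0}. w1 = w2"
      using card_le_Suc0_iff_eq[of "{w. beta w s > 0}"] by simp
    obtain w0 where w0: "\<And>w. 0 < beta w s \<Longrightarrow> w = w0"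
    proof (cases "\<exists>w. 0 < beta w s")
      case True then obtain w1 where "0 < beta w1 s" by blast
      then show ?thesis using one that by blast
    next
      case False then show ?thesis using that by blast
    qed
    obtain a where a: "markov_kernel (p(s := dlt a))"
       "disc_reward alpha beta R gamma mu p \<le> disc_reward alpha beta R gamma mu (p(s := dlt a))"
      using improve[OF p(1) mu w0] by blast
    show ?thesis
    proof (intro exI[of _ "p(s := dlt a)"] conjI ballI impI)
      show "markov_kernel (p(s := dlt a))" by (rule a(1))
      show "disc_reward alpha beta R gamma mu pol \<le> disc_reward alpha beta R gamma mu (p(s := dlt a))"
        using p(2) a(2) by linarith
      fix s' assume "s' \<in> insert s S" "card {w. beta w s' > 0} \<le> 1"
      then show "\<exists>a'. (p(s := dlt a)) s' = dlt a'" using p(3) by (cases "s' = s") auto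
    qed
  qed
qed

end


theorem theorem8:
  fixes alpha :: "'w::finite \<Rightarrow> 'a::finite \<Rightarrow> 'w \<Rightarrow> real"
    and beta :: "'w \<Rightarrow> 's::finite \<Rightarrow> real"
    and R :: "'w \<Rightarrow> 'a \<Rightarrow> real"
    and gamma :: real
    and mu :: "'w \<Rightarrow> real"
  assumes "markov_kernel beta"
    and "\<forall>w a. prob_dist (alpha w a)"
    and "0 < gamma" and "gamma < 1"
    and "prob_dist mu"
  shows "\<exists>pi_opt. markov_kernel pi_opt
           \<and> (\<forall>s. card {w. beta w s > 0} \<le> 1 \<longrightarrow>
                  (\<exists>a. pi_opt s = (\<lambda>b. if b = a then 1 else 0)))
           \<and> (\<forall>pol. markov_kernel pol \<longrightarrow>
                  disc_reward alpha beta R gamma mu pi_opt \<ge> disc_reward alpha beta R gamma mu pol)"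
proof -
  obtain p where p: "markov_kernel p" "\<forall>pol. markov_kernel pol \<longrightarrow>
     disc_reward alpha beta R gamma mu pol \<le> disc_reward alpha beta R gamma mu p"
    using exists_opt[where R=R, OF assms(1-4) assms(5)] by blast
  obtain q where q: "markov_kernel q" "disc_reward alpha beta R gamma mu p \<le> disc_reward alpha beta R gamma mu q"
    "\<forall>s\<in>UNIV. card {w. beta w s > 0} \<le> 1 \<longrightarrow> (\<exists>a. q s = dlt a)"
    using det_all[where R=R, OF assms(1-4) assms(5) p(1), of UNIV] by auto
  show ?thesis
  proof (rule exI[of _ q], intro conjI allI impI)
    show "markov_kernel q" by (rule q(1))
  next
    fix s :: 's assume "card {w. beta w s > 0} \<le> 1"
    then obtain a where "q s = dlt a" using q(3) by blast
    then show "\<exists>a. q s = (\<lambda>b. if b = a then 1 else 0)" by (intro exI[of _ a]) (simp add: dlt_def fun_eq_iff)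
  next
    fix pol :: "'s \<Rightarrow> 'a \<Rightarrow> real" assume "markov_kernel pol"
    then show "disc_reward alpha beta R gamma mu pol \<le> disc_reward alpha beta R gamma mu q"
      using p(2) q(2) by fastforce
  qed
qed

end
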